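(* For every non-empty list $\Omega$ of atoms, the posets $\mathrm{Frm}_\Omega$ and $\mathrm{Ctx}_\Omega$ are lattices.
   Context: Formulas are built from atoms ($p,q,\dots$) by a binary product: every formula is an atom or $A\bullet B$. A context is a finite (possibly empty) list of formulas; commas denote concatenation. The frontier $\mathrm{fr}$ of a formula is its ordered list of atom occurrences: $\mathrm{fr}(p)=p$, $\mathrm{fr}(A\bullet B)=\mathrm{fr}(A),\mathrm{fr}(B)$; the frontier of a context is the concatenation of the frontiers of its formulas. The sequent calculus has exactly four rules (no weakening, contraction or exchange): ($\bullet L$) from $A,B,\Delta\vdash C$ infer $A\bullet B,\Delta\vdash C$ (the product must be leftmost); ($\bullet R$) from $\Gamma\vdash A$ and $\Delta\vdash B$ infer $\Gamma,\Delta\vdash A\bullet B$; ($id$) $A\vdash A$; ($cut$) from $\Theta\vdash A$ and $\Gamma,A,\Delta\vdash B$ infer $\Gamma,\Theta,\Delta\vdash B$; derivable means conclusion of a finite derivation tree with no undischarged premises. The Tamari order $\le$ on formulas is the least preorder with $(A\bullet B)\bullet C\le A\bullet(B\bullet C)$ and $A_1\le A_2$, $B_1\le B_2$ implying $A_1\bullet B_1\le A_2\bullet B_2$. The substitution order on contexts is the least relation $\le$ such that: (1) if $\Gamma\vdash A$ is derivable then $\Gamma\le A$ (the one-element context); (2) $\cdot\le\cdot$ for the empty context; (3) if $\Gamma_1\le\Gamma_2$ and $\Theta_1\le\Theta_2$ then $(\Gamma_1,\Theta_1)\le(\Gamma_2,\Theta_2)$. $\mathrm{Frm}_\Omega$ is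 the set of formulas with frontier $\Omega$ under the Tamari order, and $\mathrm{Ctx}_\Omega$ is the set of contexts with frontier $\Omega$ under the substitution order. *)

theory Defs
  imports Main "HOL-Algebra.Lattice"
begin

datatype 'a frm = Atom 'a | Prod "'a frm" "'a frm"

fun fr :: "'a frm \<Rightarrow> 'a list" where
  "fr (Atom p) = [p]"
| "fr (Prod A B) = fr A @ fr B"

definition frc :: "'a frm list \<Rightarrow> 'a list" where
  "frc \<Gamma> = concat (map fr \<Gamma>)"

inductive derivable :: "'a frm list \<Rightarrow> 'a frm \<Rightarrow> bool" where
  prodL: "derivable (A # B # \<Delta>) C \<Longrightarrow> derivable (Prod A B # \<Delta>) C"
| prodR: "derivable \<Gamma> A \<Longrightarrow> derivable \<Delta> B \<Longrightarrow> derivable (\<Gamma> @ \<Delta>) (Prod A B)"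
| ident: "derivable [A] A"
| cut: "derivable \<Theta> A \<Longrightarrow> derivable (\<Gamma> @ [A] @ \<Delta>) B \<Longrightarrow> derivable (\<Gamma> @ \<Theta> @ \<Delta>) B"

inductive tamari :: "'a frm \<Rightarrow> 'a frm \<Rightarrow> bool" where
  t_refl: "tamari A A"
| t_trans: "tamari A B \<Longrightarrow> tamari B C \<Longrightarrow> tamari A C"
| t_assoc: "tamari (Prod (Prod A B) C) (Prod A (Prod B C))"
| t_cong: "tamari A1 A2 \<Longrightarrow> tamari B1 B2 \<Longrightarrow> tamari (Prod A1 B1) (Prod A2 B2)"

inductive subst_le :: "'a frm list \<Rightarrow> 'a frm list \<Rightarrow> bool" where
  s_der: "derivable \<Gamma> A \<Longrightarrow> subst_le \<Gamma> [A]"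
| s_nil: "subst_le [] []"
| s_app: "subst_le \<Gamma>1 \<Gamma>2 \<Longrightarrow> subst_le \<Theta>1 \<Theta>2 \<Longrightarrow> subst_le (\<Gamma>1 @ \<Theta>1) (\<Gamma>2 @ \<Theta>2)"

definition Frm :: "'a list \<Rightarrow> 'a frm gorder" where
  "Frm \<Omega> = \<lparr>carrier = {A. fr A = \<Omega>}, eq = (=), le = tamari\<rparr>"

definition Ctx :: "'a list \<Rightarrow> 'a frm list gorder" where
  "Ctx \<Omega> = \<lparr>carrier = {\<Gamma>. frc \<Gamma> = \<Omega>}, eq = (=), le = subst_le\<rparr>"

end

theory Submission
  imports Defs
begin

lemma fr_ne[simp]: "fr A \<noteq> []" by (induction A) auto
lemma len_pos: "0 < length (fr A)" using fr_ne by auto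

fun rv :: "'a frm \<Rightarrow> nat \<Rightarrow> nat \<Rightarrow> nat" where
  "rv (Atom a) d t = Suc d"
| "rv (Prod L R) d t = (if t = d then d + length (fr L) + length (fr R)
     else if t < d + length (fr L) then rv L d t else rv R (d + length (fr L)) t)"

lemma rv_lt: "t < d \<Longrightarrow> rv T d t = Suc d"
  by (induction T arbitrary: d) auto
lemma rv_self: "rv T d d = d + length (fr T)"
  by (cases T) auto
lemma rv_ge: "d + length (fr T) \<le> t \<Longrightarrow> rv T d t = d + length (fr T)"
proof (induction T arbitrary: d)
  case (Prod L R)
  then show ?case using len_pos[of L] len_pos[of R] by auto
qed auto
lemma rv_bound: "rv T d t \<le> d + length (fr T)"
proof (induction T arbitrary: d)
  case (Prod L R)
  have "rv L d t \<le> d + length (fr L)" "rv R (d + length (fr L)) t \<le> d + length (fr L) + length (fr R)"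
    using Prod.IH[of d] Prod.IH(2)[of "d + length (fr L)"] by auto
  then show ?case by auto
qed auto
lemma rv_gt: "d \<le> t \<Longrightarrow> t < d + length (fr T) \<Longrightarrow> t < rv T d t"
proof (induction T arbitrary: d)
  case (Prod L R)
  then show ?case using len_pos[of L] len_pos[of R] by auto
qed auto
lemma rv_nest: "d \<le> s \<Longrightarrow> s < t \<Longrightarrow> t < rv T d s \<Longrightarrow> rv T d t \<le> rv T d s"
proof (induction T arbitrary: d)
  case (Prod L R)
  show ?case
  proof (cases "s = d")
    case True
    then show ?thesis using Prod rv_bound[of L d t] rv_bound[of R "d + length (fr L)" t] by auto
  next
    case False
    show ?thesis
    proof (cases "s < d + length (fr L)")
      case True
      have "rv L d s \<le> d + length (fr L)" by (rule rv_bound)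
      then show ?thesis using Prod False True by auto
    next
      case False2: False
      then show ?thesis using Prod False by auto
    qed
  qed
qed auto

lemma tamari_fr: "tamari A B \<Longrightarrow> fr A = fr B"
  by (induction rule: tamari.induct) auto

lemma tamari_rv: "tamari A B \<Longrightarrow> rv A d t \<le> rv B d t"
proof (induction arbitrary: d t rule: tamari.induct)
  case (t_trans A B C)
  then show ?case using le_trans by blast
next
  case (t_assoc A B C)
  then show ?case using rv_bound[of B "d + length (fr A)" t] by (auto simp: add.assoc)
next
  case (t_cong A1 A2 B1 B2)
  then show ?case using tamari_fr[OF t_cong(1)] tamari_fr[OF t_cong(2)] by auto
qed auto

fun dropL :: "nat \<Rightarrow> 'a frm \<Rightarrow> 'a frm" where
  "dropL k (Atom a) = Atom a"
| "dropL k (Prod L R) = (if k = 0 then Prod L R else if length (fr L) \<le> k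
     then dropL (k - length (fr L)) R else Prod (dropL k L) R)"

lemma fr_dropL: "k < length (fr T) \<Longrightarrow> fr (dropL k T) = drop k (fr T)"
  by (induction T arbitrary: k) auto

lemma rv_dropL: "k < length (fr T) \<Longrightarrow> d + k \<le> t \<Longrightarrow>
   rv (dropL k T) (d + k) t = (if t = d + k then d + length (fr T) else rv T d t)"
proof (induction T arbitrary: k d)
  case (Atom a)
  then show ?case by auto
next
  case (Prod L R)
  show ?case
  proof (cases "k = 0")
    case True
    then show ?thesis using Prod by simp
  next
    case k0: False
    show ?thesis
    proof (cases "length (fr L) \<le> k")
      case True
      have "rv (dropL (k - length (fr L)) R) ((d + length (fr L)) + (k - length (fr L))) t =
        (if t = (d + length (fr L)) + (k - length (fr L)) then (d + length (fr L)) + length (fr R)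
         else rv R (d + length (fr L)) t)"
        using Prod True by (intro Prod.IH(2)) auto
      then show ?thesis using Prod True k0 by auto
    next
      case False
      have fl: "length (fr (dropL k L)) = length (fr L) - k" using False fr_dropL[of k L] by auto
      have ih: "t < d + length (fr L) \<Longrightarrow> rv (dropL k L) (d + k) t = (if t = d + k then d + length (fr L) else rv L d t)"
        using Prod False by (intro Prod.IH(1)) auto
      show ?thesis using Prod False k0 fl ih by auto
    qed
  qed
qed

lemma fr_single: "fr B = [a] \<Longrightarrow> B = Atom a"
  by (cases B) (auto simp: append_eq_Cons_conv)

lemma split_rv:
  assumes fr: "fr (Prod A1 A2) = fr (Prod B1 B2)"
    and le: "\<forall>t. rv (Prod A1 A2) d t \<le> rv (Prod B1 B2) d t"
  shows "(length (fr A1) = length (fr B1) \<and> fr A1 = fr B1 \<and> fr A2 = fr B2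
            \<and> (\<forall>t. rv A1 d t \<le> rv B1 d t)
            \<and> (\<forall>t. rv A2 (d + length (fr A1)) t \<le> rv B2 (d + length (fr A1)) t))
       \<or> (length (fr B1) < length (fr A1) \<and> (\<exists>C. fr A1 = fr B1 @ fr C \<and> fr C @ fr A2 = fr B2
            \<and> (\<forall>t. rv A1 d t \<le> rv (Prod B1 C) d t)
            \<and> (\<forall>t. rv (Prod C A2) (d + length (fr B1)) t \<le> rv B2 (d + length (fr B1)) t)))"
proof -
  define m where "m = length (fr A1)"
  define k where "k = length (fr B1)"
  define n where "n = length (fr A1) + length (fr A2)"
  have m0: "0 < m" and k0: "0 < k" using len_pos m_def k_def by auto
  have nB: "n = k + length (fr B2)" using fr n_def k_def by (metis fr.simps(2) length_append)
  have leA: "\<And>t. t \<noteq> d \<Longrightarrow> t < d + m \<Longrightarrow> rv A1 d t \<le> rv (Prod B1 B2) d t"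
    using le m_def by (metis rv.simps(2))
  have leA2: "\<And>t. d + m \<le> t \<Longrightarrow> rv A2 (d + m) t \<le> rv (Prod B1 B2) d t"
  proof -
    fix t assume "d + m \<le> t"
    then show "rv A2 (d + m) t \<le> rv (Prod B1 B2) d t"
      using le[rule_format, of t] m0 m_def by (auto split: if_splits)
  qed
  have Bl: "\<And>t. t \<noteq> d \<Longrightarrow> t < d + k \<Longrightarrow> rv (Prod B1 B2) d t = rv B1 d t"
    using k_def by simp
  have Br: "\<And>t. d + k \<le> t \<Longrightarrow> rv (Prod B1 B2) d t = rv B2 (d + k) t"
    using k_def len_pos[of B1] by auto
  have km: "k \<le> m"
  proof (rule ccontr)
    assume "\<not> k \<le> m"
    then have "m < k" by simp
    have "rv A2 (d + m) (d + m) \<le> rv (Prod B1 B2) d (d + m)" by (rule leA2) simp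
    also have "\<dots> = rv B1 d (d + m)" by (rule Bl) (use m0 \<open>m < k\<close> in auto)
    also have "\<dots> \<le> d + k" using rv_bound k_def by metis
    finally show False using rv_self[of A2] n_def m_def nB \<open>m < k\<close> len_pos[of B2] by auto
  qed
  show ?thesis
  proof (cases "k = m")
    case True
    have f1: "fr A1 = fr B1" "fr A2 = fr B2" using fr True m_def k_def
      by (auto simp: append_eq_append_conv)
    have r1: "\<forall>t. rv A1 d t \<le> rv B1 d t"
    proof
      fix t
      consider "t < d" | "t = d" | "d + m \<le> t" | "d < t \<and> t < d + m" by linarith
      then show "rv A1 d t \<le> rv B1 d t"
      proof cases
        case 1 then show ?thesis by (simp add: rv_lt)
      next
        case 2 then show ?thesis by (simp add: rv_self f1)
      next
        case 3 then show ?thesis using rv_ge f1 m_def by (metis order.refl)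
      next
        case 4 then show ?thesis using leA[of t] Bl[of t] True by auto
      qed
    qed
    have r2: "\<forall>t. rv A2 (d + m) t \<le> rv B2 (d + m) t"
    proof
      fix t
      consider "t < d + m" | "t = d + m" | "d + m < t" by linarith
      then show "rv A2 (d + m) t \<le> rv B2 (d + m) t"
      proof cases
        case 1 then show ?thesis by (simp add: rv_lt)
      next
        case 2 then show ?thesis by (simp add: rv_self f1)
      next
        case 3 then show ?thesis using leA2[of t] Br[of t] True by auto
      qed
    qed
    show ?thesis using True f1 r1 r2 m_def k_def by auto
  next
    case False
    then have km': "k < m" using km by simp
    define C where "C = dropL k A1"
    have frC: "fr C = drop k (fr A1)" using C_def fr_dropL km' m_def by metis
    have lenC: "length (fr C) = m - k" using frC m_def by simp
    have tk: "take k (fr A1) = fr B1"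
    proof -
      have "take k (fr A1 @ fr A2) = take k (fr B1 @ fr B2)" using fr by simp
      then show ?thesis using km' m_def k_def by simp
    qed
    have e1: "fr A1 = fr B1 @ fr C" using tk frC by (metis append_take_drop_id)
    have e2: "fr C @ fr A2 = fr B2"
    proof -
      have "drop k (fr A1 @ fr A2) = drop k (fr B1 @ fr B2)" using fr by simp
      then show ?thesis using km' m_def k_def frC by simp
    qed
    have rC: "\<And>t. d + k \<le> t \<Longrightarrow> rv C (d + k) t = (if t = d + k then d + m else rv A1 d t)"
      using rv_dropL[of k A1 d] km' m_def C_def by simp
    have r1: "\<forall>t. rv A1 d t \<le> rv (Prod B1 C) d t"
    proof
      fix t
      consider "t < d" | "t = d" | "d < t \<and> t < d + k" | "d + k \<le> t" by linarith
      then show "rv A1 d t \<le> rv (Prod B1 C) d t"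
      proof cases
        case 1 then show ?thesis by (simp add: rv_lt)
      next
        case 2 then show ?thesis using rv_self[of A1 d] e1 by simp
      next
        case 3 then show ?thesis using leA[of t] Bl[of t] km' k_def by auto
      next
        case 4
        have "rv A1 d t \<le> d + m" using rv_bound m_def by metis
        then show ?thesis using 4 rC[of t] k_def k0 by auto
      qed
    qed
    have r2: "\<forall>t. rv (Prod C A2) (d + k) t \<le> rv B2 (d + k) t"
    proof
      fix t
      consider "t < d + k" | "t = d + k" | "d + k < t \<and> t < d + m" | "d + m \<le> t" by linarith
      then show "rv (Prod C A2) (d + k) t \<le> rv B2 (d + k) t"
      proof cases
        case 1 then show ?thesis by (simp add: rv_lt)
      next
        case 2 then show ?thesis using rv_self[of B2 "d + k"] e2[symmetric] by simp
      next
        case 3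
        then have "rv (Prod C A2) (d + k) t = rv A1 d t" using rC[of t] lenC km' by simp
        then show ?thesis using leA[of t] Br[of t] 3 k0 by auto
      next
        case 4
        then have "rv (Prod C A2) (d + k) t = rv A2 (d + m) t" using lenC km' k0 by simp
        then show ?thesis using leA2[of t] Br[of t] 4 km' by auto
      qed
    qed
    show ?thesis using km' e1 e2 r1 r2 m_def k_def by blast
  qed
qed

lemma rv_tamari: "fr A = fr B \<Longrightarrow> (\<forall>t. rv A d t \<le> rv B d t) \<Longrightarrow> tamari A B"
proof (induction "length (fr A)" arbitrary: A B d rule: less_induct)
  case less
  show ?case
  proof (cases A)
    case (Atom a)
    then show ?thesis using less.prems fr_single[of B a] by (simp add: t_refl)
  next
    case (Prod A1 A2)
    obtain B1 B2 where B: "B = Prod B1 B2"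
      using less.prems Prod by (cases B) (auto simp: append_eq_Cons_conv)

    from split_rv[of A1 A2 B1 B2 d] less.prems Prod B
    consider "length (fr A1) = length (fr B1) \<and> fr A1 = fr B1 \<and> fr A2 = fr B2
            \<and> (\<forall>t. rv A1 d t \<le> rv B1 d t)
            \<and> (\<forall>t. rv A2 (d + length (fr A1)) t \<le> rv B2 (d + length (fr A1)) t)"
      | C where "length (fr B1) < length (fr A1)" "fr A1 = fr B1 @ fr C" "fr C @ fr A2 = fr B2"
            "\<forall>t. rv A1 d t \<le> rv (Prod B1 C) d t"
            "\<forall>t. rv (Prod C A2) (d + length (fr B1)) t \<le> rv B2 (d + length (fr B1)) t"
      by blast
    then show ?thesis
    proof cases
      case 1
      have "tamari A1 B1" using 1 Prod len_pos[of A2] by (intro less.hyps[of A1 B1 d]) auto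
      moreover have "tamari A2 B2" using 1 Prod len_pos[of A1] by (intro less.hyps[of A2 B2 "d + length (fr A1)"]) auto
      ultimately show ?thesis using Prod B by (simp add: t_cong)
    next
      case 2
      have "tamari A1 (Prod B1 C)"
      proof (rule less.hyps[of A1 "Prod B1 C" d])
        show "length (fr A1) < length (fr A)" using Prod len_pos[of A2] by simp
      qed (use 2 in auto)
      moreover have "tamari (Prod C A2) B2"
      proof (rule less.hyps[of "Prod C A2" B2 "d + length (fr B1)"])
        have "length (fr B2) < length (fr B)" using B len_pos[of B1] by simp
        then show "length (fr (Prod C A2)) < length (fr A)" using 2(3) less.prems(1) by simp
      qed (use 2 in auto)
      ultimately show ?thesis using Prod B
        by (meson t_assoc t_cong t_refl t_trans)
    qed
  qed
qed

lemma tamari_iff: "tamari A B \<longleftrightarrow> fr A = fr B \<and> (\<forall>t. rv A d t \<le> rv B d t)"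
  using rv_tamari tamari_fr tamari_rv by metis

lemma rv_antisym: "fr A = fr B \<Longrightarrow> (\<forall>t. rv A d t \<le> rv B d t) \<Longrightarrow> (\<forall>t. rv B d t \<le> rv A d t) \<Longrightarrow> A = B"
proof (induction A arbitrary: B d)
  case (Atom a)
  then show ?case using fr_single[of B a] by simp
next
  case (Prod A1 A2)
  obtain B1 B2 where B: "B = Prod B1 B2"
    using Prod.prems by (cases B) (auto simp: append_eq_Cons_conv)
  have p1: "fr (Prod A1 A2) = fr (Prod B1 B2)" and p2: "fr (Prod B1 B2) = fr (Prod A1 A2)"
    using Prod.prems B by simp_all
  have l1: "\<forall>t. rv (Prod A1 A2) d t \<le> rv (Prod B1 B2) d t"
    and l2: "\<forall>t. rv (Prod B1 B2) d t \<le> rv (Prod A1 A2) d t"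
    using Prod.prems B by simp_all
  note s1 = split_rv[OF p1 l1]
  note s2 = split_rv[OF p2 l2]
  have a1: "length (fr B1) \<le> length (fr A1)" using s1 by linarith
  have a2: "length (fr A1) \<le> length (fr B1)" using s2 by linarith
  have eq: "length (fr A1) = length (fr B1)" using a1 a2 by simp
  have h1: "fr A1 = fr B1 \<and> fr A2 = fr B2 \<and> (\<forall>t. rv A1 d t \<le> rv B1 d t)
            \<and> (\<forall>t. rv A2 (d + length (fr A1)) t \<le> rv B2 (d + length (fr A1)) t)"
    using s1 eq by (metis less_irrefl)
  have h2: "(\<forall>t. rv B1 d t \<le> rv A1 d t)
            \<and> (\<forall>t. rv B2 (d + length (fr B1)) t \<le> rv A2 (d + length (fr B1)) t)"
    using s2 eq by (metis less_irrefl)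
  have "A1 = B1" using Prod.IH(1)[of B1 d] h1 h2 by blast
  moreover have "A2 = B2" using Prod.IH(2)[of B2 "d + length (fr A1)"] h1 h2 eq by simp
  ultimately show ?case using B by simp
qed

lemma tamari_antisym: "tamari A B \<Longrightarrow> tamari B A \<Longrightarrow> A = B"
  using rv_antisym tamari_iff by metis

definition bsplit :: "(nat \<Rightarrow> nat) \<Rightarrow> nat \<Rightarrow> nat \<Rightarrow> nat" where
  "bsplit R i j = (LEAST t. i < t \<and> (j \<le> R t \<or> Suc t = j))"

lemma bsplit:
  assumes "Suc i < j"
  shows "i < bsplit R i j \<and> bsplit R i j < j \<and> (j \<le> R (bsplit R i j) \<or> Suc (bsplit R i j) = j)
     \<and> (\<forall>t. i < t \<and> t < bsplit R i j \<longrightarrow> R t < j)"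
proof -
  have w: "i < j - 1 \<and> (j \<le> R (j - 1) \<or> Suc (j - 1) = j)" using assms by auto
  have p: "i < bsplit R i j \<and> (j \<le> R (bsplit R i j) \<or> Suc (bsplit R i j) = j)"
    unfolding bsplit_def by (rule LeastI[of _ "j - 1"]) (rule w)
  have le: "bsplit R i j \<le> j - 1"
    unfolding bsplit_def by (rule Least_le) (rule w)
  have m: "\<forall>t. i < t \<and> t < bsplit R i j \<longrightarrow> R t < j"
  proof (intro allI impI)
    fix t assume t: "i < t \<and> t < bsplit R i j"
    then have "\<not> (i < t \<and> (j \<le> R t \<or> Suc t = j))"
      unfolding bsplit_def using not_less_Least by blast
    then show "R t < j" using t by auto
  qed
  show ?thesis using p le m assms by auto
qed

function build :: "(nat \<Rightarrow> nat) \<Rightarrow> 'a list \<Rightarrow> nat \<Rightarrow> nat \<Rightarrow> 'a frm" where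
  "build R w i j = (if j \<le> Suc i then Atom (w ! i)
     else Prod (build R w i (bsplit R i j)) (build R w (bsplit R i j) j))"
  by pat_completeness auto
termination
  apply (relation "measure (\<lambda>(R, w, i, j). j - i)")
    apply simp
  subgoal for R w i j
    using bsplit[of i j R] by (simp add: diff_less_mono)
  subgoal for R w i j
    using bsplit[of i j R] by (simp add: diff_less_mono2)
  done

declare build.simps[simp del]

lemma build_props:
  shows "(\<forall>t. t < length w \<longrightarrow> t < R t) \<Longrightarrow> (\<forall>s t. s < t \<and> t < R s \<longrightarrow> R t \<le> R s) \<Longrightarrow> j \<le> length w \<Longrightarrow> i < j \<Longrightarrow> j \<le> R i \<Longrightarrow> (\<forall>t. i < t \<and> t < j \<longrightarrow> R t \<le> j) \<Longrightarrow>
    fr (build R w i j) = take (j - i) (drop i w) \<and>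
    (\<forall>t. i \<le> t \<and> t < j \<longrightarrow> rv (build R w i j) i t = (if t = i then j else R t))"
proof (induction R w i j rule: build.induct)
  case (1 R w i j)
  note V1 = 1(3) and V2 = 1(4)
  note hyp = 1(5-8)
  show ?case
  proof (cases "j \<le> Suc i")
    case True
    then have j: "j = Suc i" using hyp by simp
    have "take 1 (drop i w) = [w ! i]" using hyp j
      by (simp add: Cons_nth_drop_Suc[symmetric])
    then show ?thesis using True j by (subst build.simps, simp)+
  next
    case False
    define s where "s = bsplit R i j"
    have sp: "i < s" "s < j" "j \<le> R s \<or> Suc s = j" "\<forall>t. i < t \<and> t < s \<longrightarrow> R t < j"
      using bsplit[of i j R] False s_def by auto
    have Rs: "R s = j"
    proof -
      have "j \<le> R s"
      proof (cases "j \<le> R s")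
        case False
        then have "Suc s = j" using sp(3) by simp
        then show ?thesis using V1[rule_format, of s] hyp(1) by linarith
      qed
      moreover have "R s \<le> j" using hyp(4) sp by auto
      ultimately show ?thesis by simp
    qed
    have g1: "\<forall>t. i < t \<and> t < s \<longrightarrow> R t \<le> s"
    proof (intro allI impI)
      fix t assume t: "i < t \<and> t < s"
      then have "R t < j" using sp by auto
      show "R t \<le> s"
      proof (rule ccontr)
        assume "\<not> R t \<le> s"
        then have "R s \<le> R t" using V2 t by auto
        then show False using Rs \<open>R t < j\<close> by simp
      qed
    qed
    have IH1: "fr (build R w i s) = take (s - i) (drop i w) \<and>
      (\<forall>t. i \<le> t \<and> t < s \<longrightarrow> rv (build R w i s) i t = (if t = i then s else R t))"
      using 1(1)[OF False V1 V2] s_def sp g1 V1 V2 hyp by auto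
    have IH2: "fr (build R w s j) = take (j - s) (drop s w) \<and>
      (\<forall>t. s \<le> t \<and> t < j \<longrightarrow> rv (build R w s j) s t = (if t = s then j else R t))"
      using 1(2)[OF False V1 V2] s_def sp V1 V2 hyp Rs by auto
    have b: "build R w i j = Prod (build R w i s) (build R w s j)"
      using False s_def by (subst build.simps) simp
    have l1: "length (fr (build R w i s)) = s - i" using IH1 sp hyp(1) by simp
    have l2: "length (fr (build R w s j)) = j - s" using IH2 sp hyp(1) by simp
    have frb: "fr (build R w i j) = take (j - i) (drop i w)"
    proof -
      have "take (j - i) (drop i w) = take ((s - i) + (j - s)) (drop i w)" using sp by simp
      also have "\<dots> = take (s - i) (drop i w) @ take (j - s) (drop (s - i) (drop i w))"
        by (rule take_add)
      also have "drop (s - i) (drop i w) = drop s w" using sp by simp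
      finally have "take (j - i) (drop i w) = take (s - i) (drop i w) @ take (j - s) (drop s w)" .
      then show ?thesis using b IH1 IH2 by simp
    qed
    have rvb: "\<forall>t. i \<le> t \<and> t < j \<longrightarrow> rv (build R w i j) i t = (if t = i then j else R t)"
    proof (intro allI impI)
      fix t assume t: "i \<le> t \<and> t < j"
      show "rv (build R w i j) i t = (if t = i then j else R t)"
        using t IH1 IH2 l1 l2 sp Rs b by auto
    qed
    show ?thesis using frb rvb by simp
  qed
qed

lemma meet_ex:
  assumes "fr A = fr B"
  shows "\<exists>M. fr M = fr A \<and> tamari M A \<and> tamari M B \<and> (\<forall>X. tamari X A \<longrightarrow> tamari X B \<longrightarrow> tamari X M)"
proof -
  define w where "w = fr A"
  define n where "n = length w"
  define R where "R = (\<lambda>t. min (rv A 0 t) (rv B 0 t))"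
  define M where "M = build R w 0 n"
  have lA: "length (fr A) = n" and lB: "length (fr B) = n" using assms w_def n_def by auto
  have V1: "\<forall>t. t < length w \<longrightarrow> t < R t"
    using rv_gt[of 0 _ A] rv_gt[of 0 _ B] lA lB R_def n_def by auto
  have V2: "\<forall>s t. s < t \<and> t < R s \<longrightarrow> R t \<le> R s"
  proof (intro allI impI)
    fix s t assume st: "s < t \<and> t < R s"
    have "rv A 0 t \<le> rv A 0 s" using rv_nest[of 0 s t A] st R_def by auto
    moreover have "rv B 0 t \<le> rv B 0 s" using rv_nest[of 0 s t B] st R_def by auto
    ultimately show "R t \<le> R s" using R_def by auto
  qed
  have n0: "0 < n" using lA len_pos[of A] by simp
  have R0: "n \<le> R 0" using rv_self[of A 0] rv_self[of B 0] lA lB R_def by simp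
  have Rb: "\<forall>t. 0 < t \<and> t < n \<longrightarrow> R t \<le> n" using rv_bound[of A 0] lA R_def by (simp add: min.coboundedI1)
  from build_props[OF V1 V2, of n 0] n_def n0 R0 Rb
  have frM: "fr M = w" and rvM: "\<forall>t. t < n \<longrightarrow> rv M 0 t = (if t = 0 then n else R t)"
    using M_def by auto
  have rvM': "\<forall>t. rv M 0 t = R t"
  proof
    fix t
    show "rv M 0 t = R t"
    proof (cases "t < n")
      case True then show ?thesis using rvM rv_self[of A 0] rv_self[of B 0] lA lB R_def by auto
    next
      case False
      then show ?thesis using rv_ge[of 0 M t] rv_ge[of 0 A t] rv_ge[of 0 B t] frM lA lB n_def R_def by auto
    qed
  qed
  have "tamari M A" using tamari_iff[of M A 0] rvM' frM w_def R_def by auto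
  moreover have "tamari M B" using tamari_iff[of M B 0] rvM' frM w_def assms R_def by auto
  moreover have "\<forall>X. tamari X A \<longrightarrow> tamari X B \<longrightarrow> tamari X M"
    using tamari_iff[of _ _ 0] rvM' frM w_def R_def by (metis min.boundedI)
  ultimately show ?thesis using frM w_def by blast
qed

fun mirror :: "'a frm \<Rightarrow> 'a frm" where
  "mirror (Atom a) = Atom a"
| "mirror (Prod A B) = Prod (mirror B) (mirror A)"

lemma fr_mirror[simp]: "fr (mirror A) = rev (fr A)" by (induction A) auto
lemma mirror_mirror[simp]: "mirror (mirror A) = A" by (induction A) auto
lemma tamari_mirror: "tamari A B \<Longrightarrow> tamari (mirror B) (mirror A)"
proof (induction rule: tamari.induct)
  case (t_trans A B C) then show ?case using tamari.t_trans by blast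
qed (auto intro: tamari.intros)

lemma join_ex:
  assumes "fr A = fr B"
  shows "\<exists>J. fr J = fr A \<and> tamari A J \<and> tamari B J \<and> (\<forall>X. tamari A X \<longrightarrow> tamari B X \<longrightarrow> tamari J X)"
proof -
  obtain M where M: "fr M = fr (mirror A)" "tamari M (mirror A)" "tamari M (mirror B)"
    "\<forall>X. tamari X (mirror A) \<longrightarrow> tamari X (mirror B) \<longrightarrow> tamari X M"
    using meet_ex[of "mirror A" "mirror B"] assms by auto
  have "fr (mirror M) = fr A" using M by simp
  moreover have "tamari A (mirror M)" using tamari_mirror[OF M(2)] by simp
  moreover have "tamari B (mirror M)" using tamari_mirror[OF M(3)] by simp
  moreover have "\<forall>X. tamari A X \<longrightarrow> tamari B X \<longrightarrow> tamari (mirror M) X"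
  proof (intro allI impI)
    fix X assume "tamari A X" "tamari B X"
    then have "tamari (mirror X) M" using M(4) tamari_mirror by blast
    then show "tamari (mirror M) X" using tamari_mirror by fastforce
  qed
  ultimately show ?thesis by blast
qed

lemma frc_simps[simp]: "frc [] = []" "frc (G # \<Gamma>) = fr G @ frc \<Gamma>" "frc (\<Gamma> @ \<Delta>) = frc \<Gamma> @ frc \<Delta>"
  by (simp_all add: frc_def)

lemma fr_foldl: "fr (foldl Prod S \<Gamma>) = fr S @ frc \<Gamma>"
  by (induction \<Gamma> arbitrary: S) auto

lemma foldl_mono: "tamari S S' \<Longrightarrow> tamari (foldl Prod S \<Gamma>) (foldl Prod S' \<Gamma>)"
  by (induction \<Gamma> arbitrary: S S') (auto intro: t_cong t_refl)

lemma foldl_assoc: "tamari (foldl Prod S (D # \<Delta>)) (Prod S (foldl Prod D \<Delta>))"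
proof (induction \<Delta> rule: rev_induct)
  case Nil then show ?case by (simp add: t_refl)
next
  case (snoc E \<Delta>)
  have "tamari (Prod (foldl Prod S (D # \<Delta>)) E) (Prod (Prod S (foldl Prod D \<Delta>)) E)"
    using snoc t_cong t_refl by blast
  moreover have "tamari (Prod (Prod S (foldl Prod D \<Delta>)) E) (Prod S (Prod (foldl Prod D \<Delta>) E))"
    by (rule t_assoc)
  ultimately show ?case using t_trans by simp blast
qed

lemma derivable_ne: "derivable \<Gamma> C \<Longrightarrow> \<Gamma> \<noteq> []"
  by (induction rule: derivable.induct) auto

definition lf :: "'a frm list \<Rightarrow> 'a frm" where "lf \<Gamma> = foldl Prod (hd \<Gamma>) (tl \<Gamma>)"

lemma derivable_tam: "derivable \<Gamma> C \<Longrightarrow> tamari (lf \<Gamma>) C"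
proof (induction rule: derivable.induct)
  case (prodL A B \<Delta> C)
  then show ?case by (simp add: lf_def)
next
  case (prodR \<Gamma> A \<Delta> B)
  obtain G \<Gamma>' where G: "\<Gamma> = G # \<Gamma>'" using derivable_ne[OF prodR(1)] by (cases \<Gamma>) auto
  obtain D \<Delta>' where D: "\<Delta> = D # \<Delta>'" using derivable_ne[OF prodR(2)] by (cases \<Delta>) auto
  have "lf (\<Gamma> @ \<Delta>) = foldl Prod (lf \<Gamma>) (D # \<Delta>')" using G D by (simp add: lf_def)
  moreover have "tamari (foldl Prod (lf \<Gamma>) (D # \<Delta>')) (Prod (lf \<Gamma>) (lf \<Delta>))"
    using foldl_assoc D by (simp add: lf_def)
  moreover have "tamari (Prod (lf \<Gamma>) (lf \<Delta>)) (Prod A B)" using prodR t_cong by blast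
  ultimately show ?case using t_trans by metis
next
  case (ident A)
  then show ?case by (simp add: lf_def t_refl)
next
  case (cut \<Theta> A \<Gamma> \<Delta> B)
  obtain T \<Theta>' where T: "\<Theta> = T # \<Theta>'" using derivable_ne[OF cut(1)] by (cases \<Theta>) auto
  have "tamari (lf (\<Gamma> @ \<Theta> @ \<Delta>)) (lf (\<Gamma> @ [A] @ \<Delta>))"
  proof (cases \<Gamma>)
    case Nil
    then show ?thesis using T foldl_mono[OF cut(3), of \<Delta>] by (simp add: lf_def)
  next
    case (Cons G \<Gamma>')
    have "tamari (foldl Prod (foldl Prod G \<Gamma>') (T # \<Theta>')) (Prod (foldl Prod G \<Gamma>') A)"
      using foldl_assoc[of "foldl Prod G \<Gamma>'" T \<Theta>'] cut(3) T t_cong t_refl t_trans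
      by (metis lf_def list.sel(1) list.sel(3))
    then show ?thesis using Cons T foldl_mono by (simp add: lf_def)
  qed
  then show ?case using cut(4) t_trans by blast
qed

lemma derivable_cut0: "derivable \<Theta> A \<Longrightarrow> derivable [A] B \<Longrightarrow> derivable \<Theta> B"
  using derivable.cut[of \<Theta> A "[]" "[]" B] by simp

lemma tam_derivable1: "tamari A B \<Longrightarrow> derivable [A] B"
proof (induction rule: tamari.induct)
  case (t_refl A) then show ?case by (rule ident)
next
  case (t_trans A B C) then show ?case using derivable_cut0 by blast
next
  case (t_assoc A B C)
  have "derivable [B, C] (Prod B C)" using prodR[OF ident ident, of B C] by simp
  then have "derivable ([A] @ [B, C]) (Prod A (Prod B C))" using prodR[OF ident] by blast
  then have "derivable (A # B # [C]) (Prod A (Prod B C))" by simp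
  then have "derivable (Prod A B # [C]) (Prod A (Prod B C))" by (rule prodL)
  then show ?case using prodL[of "Prod A B" C "[]"] by simp
next
  case (t_cong A1 A2 B1 B2)
  have "derivable ([A1] @ [B1]) (Prod A2 B2)" using prodR t_cong by blast
  then show ?case using prodL[of A1 B1 "[]"] by simp
qed

lemma derivable_lf: "\<Gamma> \<noteq> [] \<Longrightarrow> derivable \<Gamma> (lf \<Gamma>)"
proof (induction \<Gamma> rule: rev_induct)
  case (snoc x \<Gamma>)
  show ?case
  proof (cases "\<Gamma> = []")
    case True then show ?thesis by (simp add: lf_def ident)
  next
    case False
    have "derivable (\<Gamma> @ [x]) (Prod (lf \<Gamma>) x)" using prodR[OF snoc(1)[OF False] ident] .
    moreover have "lf (\<Gamma> @ [x]) = Prod (lf \<Gamma>) x" using False by (cases \<Gamma>) (auto simp: lf_def)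
    ultimately show ?thesis by simp
  qed
qed simp

lemma tam_derivable: "\<Gamma> \<noteq> [] \<Longrightarrow> tamari (lf \<Gamma>) C \<Longrightarrow> derivable \<Gamma> C"
  using derivable_cut0 derivable_lf tam_derivable1 by blast

lemma subst_tam: "subst_le \<Gamma> \<Delta> \<Longrightarrow> tamari (foldl Prod S \<Gamma>) (foldl Prod S \<Delta>)"
proof (induction arbitrary: S rule: subst_le.induct)
  case (s_der \<Gamma> A)
  obtain G \<Gamma>' where G: "\<Gamma> = G # \<Gamma>'" using derivable_ne[OF s_der] by (cases \<Gamma>) auto
  have "tamari (foldl Prod S \<Gamma>) (Prod S (lf \<Gamma>))" using foldl_assoc G by (simp add: lf_def)
  moreover have "tamari (Prod S (lf \<Gamma>)) (Prod S A)" using derivable_tam[OF s_der] t_cong t_refl by blast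
  ultimately show ?case using t_trans by simp blast
next
  case s_nil then show ?case by (simp add: t_refl)
next
  case (s_app \<Gamma>1 \<Gamma>2 \<Theta>1 \<Theta>2)
  have "tamari (foldl Prod (foldl Prod S \<Gamma>1) \<Theta>1) (foldl Prod (foldl Prod S \<Gamma>1) \<Theta>2)" using s_app by blast
  moreover have "tamari (foldl Prod (foldl Prod S \<Gamma>1) \<Theta>2) (foldl Prod (foldl Prod S \<Gamma>2) \<Theta>2)"
    using foldl_mono s_app by blast
  ultimately show ?case using t_trans by simp blast
qed

lemma subst_blocks: "subst_le \<Gamma> \<Delta> \<Longrightarrow> \<exists>Gs. \<Gamma> = concat Gs \<and> list_all2 derivable Gs \<Delta>"
proof (induction rule: subst_le.induct)
  case (s_der \<Gamma> A) then show ?case by (intro exI[of _ "[\<Gamma>]"]) auto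
next
  case s_nil then show ?case by auto
next
  case (s_app \<Gamma>1 \<Gamma>2 \<Theta>1 \<Theta>2)
  then obtain G1 G2 where "\<Gamma>1 = concat G1" "list_all2 derivable G1 \<Gamma>2" "\<Theta>1 = concat G2" "list_all2 derivable G2 \<Theta>2"
    by blast
  then show ?case by (intro exI[of _ "G1 @ G2"]) (auto intro: list_all2_appendI)
qed

lemma blocks_subst: "list_all2 derivable Gs \<Delta> \<Longrightarrow> subst_le (concat Gs) \<Delta>"
proof (induction rule: list_all2_induct)
  case Nil then show ?case by (simp add: s_nil)
next
  case (Cons G Gs D \<Delta>)
  have "subst_le (G @ concat Gs) ([D] @ \<Delta>)" using s_app[OF s_der[OF Cons(1)] Cons(3)] .
  then show ?case by simp
qed

lemma subst_snoc_inv: "subst_le \<Gamma> (\<Delta> @ [C]) \<Longrightarrow> \<exists>\<Gamma>1 \<Gamma>2. \<Gamma> = \<Gamma>1 @ \<Gamma>2 \<and> subst_le \<Gamma>1 \<Delta> \<and> derivable \<Gamma>2 C"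
proof -
  assume "subst_le \<Gamma> (\<Delta> @ [C])"
  then obtain Gs where Gs: "\<Gamma> = concat Gs" "list_all2 derivable Gs (\<Delta> @ [C])" using subst_blocks by blast
  then obtain us vs where uv: "Gs = us @ vs" "list_all2 derivable us \<Delta>" "list_all2 derivable vs [C]"
    by (auto simp: list_all2_append2)
  then obtain v where "vs = [v]" "derivable v C" by (auto simp: list_all2_Cons2)
  then show ?thesis using Gs uv blocks_subst by (intro exI[of _ "concat us"] exI[of _ v]) auto
qed

lemma tam_inv: "tamari (Prod A1 A2) (Prod B1 B2) \<Longrightarrow>
   (tamari A1 B1 \<and> tamari A2 B2) \<or> (\<exists>C. tamari A1 (Prod B1 C) \<and> tamari (Prod C A2) B2)"
proof -
  assume "tamari (Prod A1 A2) (Prod B1 B2)"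
  then have f: "fr (Prod A1 A2) = fr (Prod B1 B2)" and r: "\<forall>t. rv (Prod A1 A2) 0 t \<le> rv (Prod B1 B2) 0 t"
    using tamari_iff by blast+
  from split_rv[OF f r] show ?thesis
  proof
    assume h: "length (fr A1) = length (fr B1) \<and> fr A1 = fr B1 \<and> fr A2 = fr B2
            \<and> (\<forall>t. rv A1 0 t \<le> rv B1 0 t)
            \<and> (\<forall>t. rv A2 (0 + length (fr A1)) t \<le> rv B2 (0 + length (fr A1)) t)"
    then show ?thesis using rv_tamari by blast
  next
    assume "length (fr B1) < length (fr A1) \<and> (\<exists>C. fr A1 = fr B1 @ fr C \<and> fr C @ fr A2 = fr B2
            \<and> (\<forall>t. rv A1 0 t \<le> rv (Prod B1 C) 0 t)
            \<and> (\<forall>t. rv (Prod C A2) (0 + length (fr B1)) t \<le> rv B2 (0 + length (fr B1)) t))"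
    then obtain C where C: "fr A1 = fr (Prod B1 C)" "fr (Prod C A2) = fr B2"
      "\<forall>t. rv A1 0 t \<le> rv (Prod B1 C) 0 t"
      "\<forall>t. rv (Prod C A2) (length (fr B1)) t \<le> rv B2 (length (fr B1)) t" by auto
    then show ?thesis using rv_tamari by blast
  qed
qed

lemma tam_atom_l: "tamari (Atom a) Y \<Longrightarrow> Y = Atom a"
  using tamari_fr fr_single by (metis fr.simps(1))
lemma tam_atom_r: "tamari X (Atom a) \<Longrightarrow> X = Atom a"
  using tamari_fr fr_single by (metis fr.simps(1))

lemma frc_nil: "frc \<Gamma> = [] \<longleftrightarrow> \<Gamma> = []"
  by (cases \<Gamma>) auto

lemma tam_subst: "tamari (foldl Prod (Atom a) \<Gamma>) (foldl Prod (Atom a) \<Delta>) \<Longrightarrow> subst_le \<Gamma> \<Delta>"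
proof (induction \<Gamma> arbitrary: \<Delta> rule: rev_induct)
  case Nil
  then have "foldl Prod (Atom a) \<Delta> = Atom a" using tam_atom_l by simp
  then have "fr (foldl Prod (Atom a) \<Delta>) = [a]" by simp
  then have "frc \<Delta> = []" using fr_foldl[of "Atom a" \<Delta>] by simp
  then have "\<Delta> = []" using frc_nil by blast
  then show ?case by (simp add: s_nil)
next
  case (snoc G \<Gamma>')
  show ?case
  proof (cases \<Delta> rule: rev_cases)
    case Nil
    then show ?thesis using snoc(2) tam_atom_r by fastforce
  next
    case (snoc \<Delta>' D)
    have t: "tamari (Prod (foldl Prod (Atom a) \<Gamma>') G) (Prod (foldl Prod (Atom a) \<Delta>') D)"
      using snoc.prems snoc by simp
    from tam_inv[OF t] show ?thesis
    proof
      assume h: "tamari (foldl Prod (Atom a) \<Gamma>') (foldl Prod (Atom a) \<Delta>') \<and> tamari G D"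
      have "subst_le (\<Gamma>' @ [G]) (\<Delta>' @ [D])"
        using s_app[OF snoc.IH s_der[OF tam_derivable1]] h by blast
      then show ?thesis using snoc by simp
    next
      assume "\<exists>C. tamari (foldl Prod (Atom a) \<Gamma>') (Prod (foldl Prod (Atom a) \<Delta>') C) \<and> tamari (Prod C G) D"
      then obtain C where C: "tamari (foldl Prod (Atom a) \<Gamma>') (foldl Prod (Atom a) (\<Delta>' @ [C]))"
        "tamari (Prod C G) D" by auto
      have "subst_le \<Gamma>' (\<Delta>' @ [C])" using snoc.IH C(1) by blast
      then obtain \<Gamma>1 \<Gamma>2 where g: "\<Gamma>' = \<Gamma>1 @ \<Gamma>2" "subst_le \<Gamma>1 \<Delta>'" "derivable \<Gamma>2 C"
        using subst_snoc_inv by blast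
      have "derivable [C, G] D" using tam_derivable[of "[C, G]" D] C(2) by (simp add: lf_def)
      then have "derivable ([] @ \<Gamma>2 @ [G]) D" using derivable.cut[OF g(3), of "[]" "[G]" D] by simp
      then have "subst_le (\<Gamma>1 @ (\<Gamma>2 @ [G])) (\<Delta>' @ [D])" using s_app[OF g(2) s_der] by simp
      then show ?thesis using g snoc by simp
    qed
  qed
qed

fun spine :: "'a frm \<Rightarrow> 'a frm list" where
  "spine (Atom b) = []"
| "spine (Prod L R) = spine L @ [R]"

lemma spine_foldl: "spine (foldl Prod X \<Gamma>) = spine X @ \<Gamma>"
  by (induction \<Gamma> arbitrary: X) auto

lemma foldl_spine: "foldl Prod (Atom (hd (fr X))) (spine X) = X"
  by (induction X) auto

lemma lattice_of:
  fixes L :: "'b gorder"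
  assumes eq: "eq L = (=)"
    and refl: "\<And>x. x \<in> carrier L \<Longrightarrow> le L x x"
    and anti: "\<And>x y. x \<in> carrier L \<Longrightarrow> y \<in> carrier L \<Longrightarrow> le L x y \<Longrightarrow> le L y x \<Longrightarrow> x = y"
    and trans: "\<And>x y z. x \<in> carrier L \<Longrightarrow> y \<in> carrier L \<Longrightarrow> z \<in> carrier L \<Longrightarrow> le L x y \<Longrightarrow> le L y z \<Longrightarrow> le L x z"
    and meet: "\<And>x y. x \<in> carrier L \<Longrightarrow> y \<in> carrier L \<Longrightarrow>
       \<exists>m\<in>carrier L. le L m x \<and> le L m y \<and> (\<forall>z\<in>carrier L. le L z x \<longrightarrow> le L z y \<longrightarrow> le L z m)"
    and join: "\<And>x y. x \<in> carrier L \<Longrightarrow> y \<in> carrier L \<Longrightarrow>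
       \<exists>m\<in>carrier L. le L x m \<and> le L y m \<and> (\<forall>z\<in>carrier L. le L x z \<longrightarrow> le L y z \<longrightarrow> le L m z)"
  shows "lattice L"
proof -
  have po: "partial_order L"
    by (intro partial_order.intro weak_partial_order.intro equivalence.intro partial_order_axioms.intro
        weak_partial_order_axioms.intro) (auto simp: eq intro: refl anti trans)
  show ?thesis
  proof (intro lattice.intro upper_semilattice.intro lower_semilattice.intro po
      upper_semilattice_axioms.intro lower_semilattice_axioms.intro)
    fix x y assume xy: "x \<in> carrier L" "y \<in> carrier L"
    then obtain m where m: "m \<in> carrier L" "le L x m" "le L y m" "\<forall>z\<in>carrier L. le L x z \<longrightarrow> le L y z \<longrightarrow> le L m z"
      using join by blast
    show "\<exists>s. least L s (Upper L {x, y})"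
      by (rule exI[of _ m]) (use m xy in \<open>auto simp: least_def Upper_def\<close>)
  next
    fix x y assume xy: "x \<in> carrier L" "y \<in> carrier L"
    then obtain m where m: "m \<in> carrier L" "le L m x" "le L m y" "\<forall>z\<in>carrier L. le L z x \<longrightarrow> le L z y \<longrightarrow> le L z m"
      using meet by blast
    show "\<exists>s. greatest L s (Lower L {x, y})"
      by (rule exI[of _ m]) (use m xy in \<open>auto simp: greatest_def Lower_def\<close>)
  qed
qed

lemma frm_lattice: "lattice (Frm \<Omega>)"
proof (rule lattice_of)
  fix x y assume "x \<in> carrier (Frm \<Omega>)" "y \<in> carrier (Frm \<Omega>)"
  then have "fr x = \<Omega>" "fr y = \<Omega>" by (auto simp: Frm_def)
  then show "\<exists>m\<in>carrier (Frm \<Omega>). le (Frm \<Omega>) m x \<and> le (Frm \<Omega>) m y \<and>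
     (\<forall>z\<in>carrier (Frm \<Omega>). le (Frm \<Omega>) z x \<longrightarrow> le (Frm \<Omega>) z y \<longrightarrow> le (Frm \<Omega>) z m)"
    using meet_ex[of x y] by (auto simp: Frm_def)
next
  fix x y assume "x \<in> carrier (Frm \<Omega>)" "y \<in> carrier (Frm \<Omega>)"
  then have "fr x = \<Omega>" "fr y = \<Omega>" by (auto simp: Frm_def)
  then show "\<exists>m\<in>carrier (Frm \<Omega>). le (Frm \<Omega>) x m \<and> le (Frm \<Omega>) y m \<and>
     (\<forall>z\<in>carrier (Frm \<Omega>). le (Frm \<Omega>) x z \<longrightarrow> le (Frm \<Omega>) y z \<longrightarrow> le (Frm \<Omega>) m z)"
    using join_ex[of x y] by (auto simp: Frm_def)
qed (simp_all add: Frm_def t_refl tamari_antisym, metis t_trans)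

lemma subst_iff: "subst_le \<Gamma> \<Delta> \<longleftrightarrow> tamari (foldl Prod (Atom a) \<Gamma>) (foldl Prod (Atom a) \<Delta>)"
  using subst_tam[of \<Gamma> \<Delta> "Atom a"] tam_subst[of a \<Gamma> \<Delta>] by blast

lemma ctx_lattice: "lattice (Ctx \<Omega>)"
proof -
  define a :: 'a where "a = undefined"
  define P where "P = (\<lambda>\<Gamma>. foldl Prod (Atom a) \<Gamma>)"
  have si: "\<And>\<Gamma> \<Delta>. subst_le \<Gamma> \<Delta> \<longleftrightarrow> tamari (P \<Gamma>) (P \<Delta>)" unfolding P_def by (rule subst_iff)
  have frP: "\<And>\<Gamma>. fr (P \<Gamma>) = a # frc \<Gamma>" unfolding P_def by (simp add: fr_foldl)
  have sp: "\<And>\<Gamma>. spine (P \<Gamma>) = \<Gamma>" unfolding P_def by (simp add: spine_foldl)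
  have bk: "\<And>X. fr X = a # \<Omega> \<Longrightarrow> P (spine X) = X \<and> frc (spine X) = \<Omega>"
  proof -
    fix X assume X: "fr X = a # \<Omega>"
    have e: "P (spine X) = X" unfolding P_def using foldl_spine[of X] X by simp
    then have "fr (P (spine X)) = a # \<Omega>" using X by simp
    then have "a # frc (spine X) = a # \<Omega>" using frP[of "spine X"] by simp
    then show "P (spine X) = X \<and> frc (spine X) = \<Omega>" using e by simp
  qed
  show ?thesis
  proof (rule lattice_of)
    fix x y assume "x \<in> carrier (Ctx \<Omega>)" "y \<in> carrier (Ctx \<Omega>)"
    then have xy: "frc x = \<Omega>" "frc y = \<Omega>" by (auto simp: Ctx_def)
    obtain M where M: "fr M = fr (P x)" "tamari M (P x)" "tamari M (P y)"
      "\<forall>X. tamari X (P x) \<longrightarrow> tamari X (P y) \<longrightarrow> tamari X M"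
      using meet_ex[of "P x" "P y"] frP xy by auto
    have b: "P (spine M) = M" "frc (spine M) = \<Omega>" using bk[of M] M(1) frP xy by auto
    show "\<exists>m\<in>carrier (Ctx \<Omega>). le (Ctx \<Omega>) m x \<and> le (Ctx \<Omega>) m y \<and>
     (\<forall>z\<in>carrier (Ctx \<Omega>). le (Ctx \<Omega>) z x \<longrightarrow> le (Ctx \<Omega>) z y \<longrightarrow> le (Ctx \<Omega>) z m)"
    proof (intro bexI[of _ "spine M"] conjI ballI impI)
      show "spine M \<in> carrier (Ctx \<Omega>)" using b(2) by (simp add: Ctx_def)
      show "le (Ctx \<Omega>) (spine M) x" unfolding Ctx_def si using b(1) M(2) by simp
      show "le (Ctx \<Omega>) (spine M) y" unfolding Ctx_def si using b(1) M(3) by simp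
      fix z assume "le (Ctx \<Omega>) z x" "le (Ctx \<Omega>) z y"
      then have "tamari (P z) (P x)" "tamari (P z) (P y)" unfolding Ctx_def si by simp_all
      then show "le (Ctx \<Omega>) z (spine M)" unfolding Ctx_def si using b(1) M(4) by simp
    qed
  next
    fix x y assume "x \<in> carrier (Ctx \<Omega>)" "y \<in> carrier (Ctx \<Omega>)"
    then have xy: "frc x = \<Omega>" "frc y = \<Omega>" by (auto simp: Ctx_def)
    obtain M where M: "fr M = fr (P x)" "tamari (P x) M" "tamari (P y) M"
      "\<forall>X. tamari (P x) X \<longrightarrow> tamari (P y) X \<longrightarrow> tamari M X"
      using join_ex[of "P x" "P y"] frP xy by auto
    have b: "P (spine M) = M" "frc (spine M) = \<Omega>" using bk[of M] M(1) frP xy by auto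
    show "\<exists>m\<in>carrier (Ctx \<Omega>). le (Ctx \<Omega>) x m \<and> le (Ctx \<Omega>) y m \<and>
     (\<forall>z\<in>carrier (Ctx \<Omega>). le (Ctx \<Omega>) x z \<longrightarrow> le (Ctx \<Omega>) y z \<longrightarrow> le (Ctx \<Omega>) m z)"
    proof (intro bexI[of _ "spine M"] conjI ballI impI)
      show "spine M \<in> carrier (Ctx \<Omega>)" using b(2) by (simp add: Ctx_def)
      show "le (Ctx \<Omega>) x (spine M)" unfolding Ctx_def si using b(1) M(2) by simp
      show "le (Ctx \<Omega>) y (spine M)" unfolding Ctx_def si using b(1) M(3) by simp
      fix z assume "le (Ctx \<Omega>) x z" "le (Ctx \<Omega>) y z"
      then have "tamari (P x) (P z)" "tamari (P y) (P z)" unfolding Ctx_def si by simp_all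
      then show "le (Ctx \<Omega>) (spine M) z" unfolding Ctx_def si using b(1) M(4) by simp
    qed
  next
    fix x y assume "x \<in> carrier (Ctx \<Omega>)" "y \<in> carrier (Ctx \<Omega>)" "le (Ctx \<Omega>) x y" "le (Ctx \<Omega>) y x"
    then have "tamari (P x) (P y)" "tamari (P y) (P x)" unfolding Ctx_def si by simp_all
    then have "P x = P y" by (rule tamari_antisym)
    then show "x = y" using sp by metis
    next
    show "eq (Ctx \<Omega>) = (=)" by (simp add: Ctx_def)
  next
    fix x assume "x \<in> carrier (Ctx \<Omega>)"
    show "le (Ctx \<Omega>) x x" unfolding Ctx_def si by (simp add: t_refl)
  next
    fix x y z assume "x \<in> carrier (Ctx \<Omega>)" "y \<in> carrier (Ctx \<Omega>)" "z \<in> carrier (Ctx \<Omega>)"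
      "le (Ctx \<Omega>) x y" "le (Ctx \<Omega>) y z"
    then show "le (Ctx \<Omega>) x z" unfolding Ctx_def si using t_trans by simp blast
  qed
qed

theorem theorem2p17:
  fixes \<Omega> :: "'a list"
  assumes "\<Omega> \<noteq> []"
  shows "lattice (Frm \<Omega>) \<and> lattice (Ctx \<Omega>)"
  using frm_lattice ctx_lattice by blast

end
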